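(* For $N>0$ let $\mathcal{R}_N=\{(x,y)\in\mathbb{R}^2:|A(x,y)|\le(N/4)^{1/3},\ |B(x,y)|\le(N/27)^{1/2}\}$ and $V=\mathrm{Vol}(\mathcal{R}_1)$. Then $\mathcal{R}_N=\{(N^{\frac{\tau}{6\varsigma}}x,N^{\frac{1}{6\varsigma}}y):(x,y)\in\mathcal{R}_1\}$, $\mathcal{R}_1$ is bounded, and $\mathrm{Vol}(\mathcal{R}_N)=N^{\frac{\tau+1}{6\varsigma}}V$. In particular every $(x,y)\in\mathcal{R}_N$ satisfies $x\ll N^{\frac{\tau}{6\varsigma}}$ and $y\ll N^{\frac{1}{6\varsigma}}$, with implied constants depending only on $\mathcal{R}_1$.
   Context: Fix $\upsilon\in\{1,2\}$ and positive integers $m,\tau$ with $m=1$ or $\upsilon\tau=1$. Let $f,g\in\mathbb{Z}[t]$ with $4f^3+27g^2\ne0$, no common real root, and $\max\{\frac12\deg f,\frac13\deg g\}=\frac{2m}{\upsilon\tau}$. Let $\varsigma=2m$ if $\upsilon=1$, $\varsigma=1$ if $\upsilon=2$; $A(x,y)=y^{2\varsigma}f(x/y^\tau)$, $B(x,y)=y^{3\varsigma}g(x/y^\tau)\in\mathbb{Z}[x,y]$. *)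

theory Defs
  imports "HOL-Analysis.Analysis" "HOL-Computational_Algebra.Polynomial"
begin

definition varsigma :: "nat \<Rightarrow> nat \<Rightarrow> nat" where
  "varsigma \<upsilon> m = (if \<upsilon> = 1 then 2 * m else 1)"

text \<open>The weighted homogenisation y^d f(x / y^tau), as the polynomial in x, y
  (sum of coeff_i x^i y^(d - tau i)); under the hypotheses tau * deg f <= d.\<close>
definition homog :: "int poly \<Rightarrow> nat \<Rightarrow> nat \<Rightarrow> real \<Rightarrow> real \<Rightarrow> real" where
  "homog p d \<tau> x y = (\<Sum>i\<le>degree p. of_int (coeff p i) * x ^ i * y ^ (d - \<tau> * i))"

definition formA :: "int poly \<Rightarrow> nat \<Rightarrow> nat \<Rightarrow> nat \<Rightarrow> real \<Rightarrow> real \<Rightarrow> real" where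
  "formA f \<upsilon> m \<tau> x y = homog f (2 * varsigma \<upsilon> m) \<tau> x y"

definition formB :: "int poly \<Rightarrow> nat \<Rightarrow> nat \<Rightarrow> nat \<Rightarrow> real \<Rightarrow> real \<Rightarrow> real" where
  "formB g \<upsilon> m \<tau> x y = homog g (3 * varsigma \<upsilon> m) \<tau> x y"

definition regionR :: "int poly \<Rightarrow> int poly \<Rightarrow> nat \<Rightarrow> nat \<Rightarrow> nat \<Rightarrow> real \<Rightarrow> (real \<times> real) set" where
  "regionR f g \<upsilon> m \<tau> N = {(x, y). \<bar>formA f \<upsilon> m \<tau> x y\<bar> \<le> (N / 4) powr (1/3)
                                  \<and> \<bar>formB g \<upsilon> m \<tau> x y\<bar> \<le> (N / 27) powr (1/2)}"

end

theory Submission imports Defs begin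

lemma homog_scale:
  assumes "\<tau> * degree p \<le> d"
  shows "homog p d \<tau> (l ^ \<tau> * x) (l * y) = l ^ d * homog p d \<tau> x y"
  unfolding homog_def sum_distrib_left
proof (rule sum.cong[OF refl])
  fix i assume "i \<in> {..degree p}"
  hence "\<tau> * i \<le> d" using assms by (meson atMost_iff dual_order.trans mult_le_mono2)
  hence e: "l ^ d = l ^ (\<tau> * i) * l ^ (d - \<tau> * i)" by (simp add: power_add[symmetric])
  show "of_int (coeff p i) * (l ^ \<tau> * x) ^ i * (l * y) ^ (d - \<tau> * i) =
        l ^ d * (of_int (coeff p i) * x ^ i * y ^ (d - \<tau> * i))"
    unfolding e by (simp add: power_mult_distrib power_mult algebra_simps)
qed

lemma homog_dehom:
  assumes "\<tau> * degree p \<le> d" "y \<noteq> 0"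
  shows "homog p d \<tau> x y = y ^ d * poly (map_poly of_int p) (x / y ^ \<tau>)"
proof -
  have dg: "degree (map_poly (of_int :: int \<Rightarrow> real) p) = degree p"
    by (rule degree_map_poly) simp
  show ?thesis
    unfolding homog_def poly_altdef dg sum_distrib_left
  proof (rule sum.cong[OF refl])
    fix i assume "i \<in> {..degree p}"
    hence "\<tau> * i \<le> d" using assms by (meson atMost_iff dual_order.trans mult_le_mono2)
    hence e: "y ^ d = y ^ (\<tau> * i) * y ^ (d - \<tau> * i)" by (simp add: power_add[symmetric])
    show "of_int (coeff p i) * x ^ i * y ^ (d - \<tau> * i) =
         y ^ d * (coeff (map_poly of_int p) i * (x / y ^ \<tau>) ^ i)"
      unfolding e using assms(2) by (simp add: coeff_map_poly power_divide power_mult[symmetric] mult.commute field_simps)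
  qed
qed

lemma homog_y0:
  assumes "\<tau> * degree p = d" "\<tau> > 0"
  shows "homog p d \<tau> x 0 = of_int (lead_coeff p) * x ^ degree p"
proof -
  have "homog p d \<tau> x 0 = (\<Sum>i\<le>degree p. if i = degree p then of_int (lead_coeff p) * x ^ degree p else 0)"
    unfolding homog_def
  proof (rule sum.cong[OF refl])
    fix i assume "i \<in> {..degree p}"
    hence i: "i \<le> degree p" by simp
    show "of_int (coeff p i) * x ^ i * 0 ^ (d - \<tau> * i) =
      (if i = degree p then of_int (lead_coeff p) * x ^ degree p else (0::real))"
    proof (cases "i = degree p")
      case False
      hence "\<tau> * i < d" using i assms by (metis le_neq_implies_less mult_less_mono2)
      thus ?thesis using False by simp
    qed (use assms in simp)
  qed
  thus ?thesis by simp
qed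


lemma bounded_aux:
  fixes F G :: "real \<Rightarrow> real \<Rightarrow> real" and \<tau> a b :: nat
  assumes "\<tau> > 0" "a > 0" "b > 0"
    and sF: "\<And>l x y. F (l ^ \<tau> * x) (l * y) = l ^ a * F x y"
    and sG: "\<And>l x y. G (l ^ \<tau> * x) (l * y) = l ^ b * G x y"
    and cF: "continuous_on UNIV (\<lambda>p. F (fst p) (snd p))"
    and cG: "continuous_on UNIV (\<lambda>p. G (fst p) (snd p))"
    and nz: "\<And>u v. u \<noteq> 0 \<or> v \<noteq> 0 \<Longrightarrow> F u v \<noteq> 0 \<or> G u v \<noteq> 0"
  shows "bounded {(x, y). \<bar>F x y\<bar> \<le> 1 \<and> \<bar>G x y\<bar> \<le> 1}"
proof -
  define K where "K = {p::real\<times>real. \<bar>fst p\<bar> \<le> 1 \<and> \<bar>snd p\<bar> \<le> 1 \<and> (\<bar>fst p\<bar> = 1 \<or> \<bar>snd p\<bar> = 1)}"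
  define h where "h = (\<lambda>p::real\<times>real. \<bar>F (fst p) (snd p)\<bar> + \<bar>G (fst p) (snd p)\<bar>)"
  have "closed K" unfolding K_def
    by (intro closed_Collect_conj closed_Collect_disj closed_Collect_le closed_Collect_eq continuous_intros)
  moreover have "bounded K" unfolding bounded_iff
  proof (intro exI ballI)
    fix p assume "p \<in> K"
    hence "norm (fst p) + norm (snd p) \<le> 2" unfolding K_def by auto
    thus "norm p \<le> 2" using norm_Pair_le[of "fst p" "snd p"] by simp
  qed
  ultimately have cK: "compact K" using bounded_closed_imp_seq_compact compact_eq_seq_compact_metric by blast
  have "(1,1) \<in> K" unfolding K_def by simp
  hence "K \<noteq> {}" by blast
  moreover have "continuous_on K h" unfolding h_def
    by (intro continuous_intros continuous_on_subset[OF cF] continuous_on_subset[OF cG]) auto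
  ultimately obtain p0 where p0: "p0 \<in> K" "\<And>p. p \<in> K \<Longrightarrow> h p0 \<le> h p"
    using continuous_attains_inf[OF cK] by metis
  define c where "c = h p0"
  have "fst p0 \<noteq> 0 \<or> snd p0 \<noteq> 0" using p0(1) unfolding K_def by auto
  hence "c > 0" using nz[of "fst p0" "snd p0"] unfolding c_def h_def by auto
  define L where "L = max 1 (2 / c)"
  have L1: "L \<ge> 1" unfolding L_def by simp
  have main: "\<bar>x\<bar> \<le> L ^ \<tau> \<and> \<bar>y\<bar> \<le> L" if xy: "\<bar>F x y\<bar> \<le> 1" "\<bar>G x y\<bar> \<le> 1" for x y
  proof -
    define l where "l = max (\<bar>x\<bar> powr (1 / real \<tau>)) \<bar>y\<bar>"
    have xl: "(\<bar>x\<bar> powr (1 / real \<tau>)) ^ \<tau> = \<bar>x\<bar>"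
    proof (cases "x = 0")
      case False thus ?thesis using assms(1) by (simp add: powr_power)
    qed (use assms(1) in simp)
    have lL: "l \<le> L"
    proof (rule ccontr)
      assume "\<not> l \<le> L"
      hence l1: "l > 1" "l > 2 / c" using L_def by auto
      define u where "u = x / l ^ \<tau>"
      define v where "v = y / l"
      have lpos: "l > 0" using l1 by simp
      have xu: "x = l ^ \<tau> * u" and yv: "y = l * v" using lpos unfolding u_def v_def by auto
      have "\<bar>x\<bar> \<le> l ^ \<tau>"
        using power_mono[of "\<bar>x\<bar> powr (1 / real \<tau>)" l \<tau>] xl unfolding l_def by simp
      hence u1: "\<bar>u\<bar> \<le> 1" using lpos unfolding u_def by (simp add: abs_div)
      have v1: "\<bar>v\<bar> \<le> 1" using lpos unfolding v_def l_def by (simp add: abs_div)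
      have "\<bar>u\<bar> = 1 \<or> \<bar>v\<bar> = 1"
      proof (cases "l = \<bar>y\<bar>")
        case True thus ?thesis using lpos unfolding v_def by (simp add: abs_div)
      next
        case False
        hence "l = \<bar>x\<bar> powr (1 / real \<tau>)" unfolding l_def by (simp add: max_def split: if_splits)
        hence "l ^ \<tau> = \<bar>x\<bar>" using xl by simp
        moreover have "l ^ \<tau> > 0" using lpos by simp
        ultimately show ?thesis using lpos unfolding u_def by (simp add: abs_div)
      qed
      hence "(u, v) \<in> K" using u1 v1 unfolding K_def by simp
      hence "c \<le> h (u, v)" using p0(2) c_def by blast
      also have "\<dots> = \<bar>F x y\<bar> / l ^ a + \<bar>G x y\<bar> / l ^ b"
        unfolding h_def xu yv sF sG using lpos by (simp add: abs_mult)
      also have "\<dots> \<le> 1 / l ^ a + 1 / l ^ b"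
        using xy lpos by (intro add_mono divide_right_mono) auto
      also have "\<dots> \<le> 1 / l + 1 / l"
        using l1 assms(2,3) by (intro add_mono divide_left_mono) (auto simp: self_le_power)
      finally have "c \<le> 2 / l" by simp
      hence "c * l \<le> 2" using lpos by (simp add: field_simps)
      moreover have "2 < c * l" using l1 \<open>c > 0\<close> by (simp add: field_simps)
      ultimately show False by simp
    qed
    have "\<bar>y\<bar> \<le> L" using lL unfolding l_def by simp
    moreover have "\<bar>x\<bar> \<le> L ^ \<tau>"
    proof -
      have "\<bar>x\<bar> powr (1 / real \<tau>) \<le> L" using lL unfolding l_def by simp
      hence "(\<bar>x\<bar> powr (1 / real \<tau>)) ^ \<tau> \<le> L ^ \<tau>" by (intro power_mono) auto
      thus ?thesis using xl by simp
    qed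
    ultimately show ?thesis by simp
  qed
  show ?thesis unfolding bounded_iff
  proof (intro exI ballI)
    fix p assume "p \<in> {(x, y). \<bar>F x y\<bar> \<le> 1 \<and> \<bar>G x y\<bar> \<le> 1}"
    then obtain x y where p: "p = (x, y)" "\<bar>F x y\<bar> \<le> 1" "\<bar>G x y\<bar> \<le> 1" by auto
    have "norm p \<le> norm x + norm y" by (simp only: p(1) norm_Pair_le)
    also have "\<dots> \<le> L ^ \<tau> + L" using main[OF p(2,3)] by simp
    finally show "norm p \<le> L ^ \<tau> + L" .
  qed
qed


lemma measure_scale2:
  fixes \<alpha> \<beta> :: real and S :: "(real \<times> real) set"
  assumes "\<alpha> > 0" "\<beta> > 0" "S \<in> sets borel"
  shows "measure lborel S = \<alpha> * \<beta> * measure lborel ((\<lambda>(x, y). (\<alpha> * x, \<beta> * y)) -` S)"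
proof -
  define c where "c = (\<lambda>j::real\<times>real. if j = (1, 0) then \<alpha> else \<beta>)"
  define T where "T = (\<lambda>p::real\<times>real. 0 + (\<Sum>j\<in>Basis. (c j * (p \<bullet> j)) *\<^sub>R j))"
  have B: "(Basis :: (real\<times>real) set) = {(1,0), (0,1)}" by (auto simp: Basis_prod_def)
  have Teq: "T = (\<lambda>(x, y). (\<alpha> * x, \<beta> * y))"
    unfolding T_def B c_def by (auto simp: fun_eq_iff)
  have cnz: "\<And>j. j \<in> Basis \<Longrightarrow> c j \<noteq> 0" using assms unfolding c_def by auto
  have prodc: "(\<Prod>j\<in>Basis. \<bar>c j\<bar>) = \<alpha> * \<beta>" using assms unfolding B c_def by simp
  have lb: "lborel = density (distr lborel borel T) (\<lambda>_. (\<Prod>j\<in>Basis. \<bar>c j\<bar>))"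
    unfolding T_def by (rule lborel_affine_euclidean) (use cnz in auto)
  have "continuous_on UNIV T" unfolding Teq case_prod_beta by (intro continuous_intros)
  hence Tm: "T \<in> borel_measurable borel" by (rule borel_measurable_continuous_onI)
  have "emeasure lborel S = ennreal (\<alpha> * \<beta>) * emeasure lborel (T -` S)"
    apply (subst lb)
    using assms(3) Tm
    by (simp add: emeasure_density nn_integral_cmult_indicator emeasure_distr prodc)
  hence "measure lborel S = enn2real (ennreal (\<alpha> * \<beta>) * emeasure lborel (T -` S))"
    unfolding measure_def by simp
  also have "\<dots> = \<alpha> * \<beta> * measure lborel (T -` S)"
    using assms by (simp add: enn2real_mult measure_def)
  finally show ?thesis unfolding Teq .
qed


theorem lemma2p3:
  fixes \<upsilon> m \<tau> :: nat and f g :: "int poly"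
  assumes "\<upsilon> \<in> {1, 2}" and "m > 0" and "\<tau> > 0"
    and "m = 1 \<or> \<upsilon> * \<tau> = 1"
    and "4 * f ^ 3 + 27 * g ^ 2 \<noteq> 0"
    and "\<not> (\<exists>t::real. poly (map_poly of_int f) t = 0 \<and> poly (map_poly of_int g) t = 0)"
    and "max (real (degree f) / 2) (real (degree g) / 3) = 2 * real m / (real \<upsilon> * real \<tau>)"
  defines "\<sigma> \<equiv> real (varsigma \<upsilon> m)"
  defines "R \<equiv> regionR f g \<upsilon> m \<tau>"
  defines "V \<equiv> measure lborel (R 1)"
  shows "(\<forall>N>0. R N = (\<lambda>(x, y). (N powr (\<tau> / (6 * \<sigma>)) * x, N powr (1 / (6 * \<sigma>)) * y)) ` R 1)
       \<and> bounded (R 1)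
       \<and> (\<forall>N>0. measure lborel (R N) = N powr ((\<tau> + 1) / (6 * \<sigma>)) * V)
       \<and> (\<exists>C. \<forall>N>0. \<forall>(x, y)\<in>R N. \<bar>x\<bar> \<le> C * N powr (\<tau> / (6 * \<sigma>))
                                  \<and> \<bar>y\<bar> \<le> C * N powr (1 / (6 * \<sigma>)))"
proof -
  define s where "s = varsigma \<upsilon> m"
  have sig: "\<sigma> = real s" unfolding \<sigma>_def s_def ..
  have rhs: "2 * real m / (real \<upsilon> * real \<tau>) = real s / real \<tau>"
    using assms(1,3,4) unfolding s_def varsigma_def by auto
  have spos: "s > 0" using assms(1,2) unfolding s_def varsigma_def by auto
  have tpos: "real \<tau> > 0" using assms(3) by simp
  have df: "real (degree f) / 2 \<le> real s / real \<tau>" and dg: "real (degree g) / 3 \<le> real s / real \<tau>"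
    using assms(7) rhs by (metis max.cobounded1 max.cobounded2)+
  have dfe: "real (degree f) / 2 = real s / real \<tau> \<or> real (degree g) / 3 = real s / real \<tau>"
    using assms(7) rhs by (metis max_def)
  have degf: "\<tau> * degree f \<le> 2 * s"
  proof -
    have "real (\<tau> * degree f) \<le> real (2 * s)" using df tpos by (simp add: field_simps)
    thus ?thesis by linarith
  qed
  have degg: "\<tau> * degree g \<le> 3 * s"
  proof -
    have "real (\<tau> * degree g) \<le> real (3 * s)" using dg tpos by (simp add: field_simps)
    thus ?thesis by linarith
  qed
  have lead: "\<tau> * degree f = 2 * s \<or> \<tau> * degree g = 3 * s"
  proof -
    have "real (\<tau> * degree f) = real (2 * s) \<or> real (\<tau> * degree g) = real (3 * s)"
      using dfe tpos by (simp add: field_simps)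
    thus ?thesis by linarith
  qed
  define A where "A = formA f \<upsilon> m \<tau>"
  define B where "B = formB g \<upsilon> m \<tau>"
  have A_def': "A = homog f (2 * s) \<tau>" unfolding A_def formA_def s_def by (simp add: fun_eq_iff)
  have B_def': "B = homog g (3 * s) \<tau>" unfolding B_def formB_def s_def by (simp add: fun_eq_iff)
  have sA: "\<And>l x y. A (l ^ \<tau> * x) (l * y) = l ^ (2 * s) * A x y"
    unfolding A_def' using degf by (rule homog_scale)
  have sB: "\<And>l x y. B (l ^ \<tau> * x) (l * y) = l ^ (3 * s) * B x y"
    unfolding B_def' using degg by (rule homog_scale)
  have cA: "continuous_on UNIV (\<lambda>p. A (fst p) (snd p))"
    unfolding A_def' homog_def by (intro continuous_intros)
  have cB: "continuous_on UNIV (\<lambda>p. B (fst p) (snd p))"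
    unfolding B_def' homog_def by (intro continuous_intros)
  have nz: "A u v \<noteq> 0 \<or> B u v \<noteq> 0" if "u \<noteq> 0 \<or> v \<noteq> 0" for u v
  proof (cases "v = 0")
    case False
    show ?thesis
      unfolding A_def' B_def' homog_dehom[OF degf False] homog_dehom[OF degg False]
      using assms(6) False by auto
  next
    case True
    hence u: "u \<noteq> 0" using that by simp
    show ?thesis
    proof (cases "\<tau> * degree f = 2 * s")
      case True
      hence "f \<noteq> 0" using spos by auto
      thus ?thesis unfolding A_def' \<open>v = 0\<close> homog_y0[OF True assms(3)] using u by simp
    next
      case False
      hence T: "\<tau> * degree g = 3 * s" using lead by simp
      hence "g \<noteq> 0" using spos by auto
      thus ?thesis unfolding B_def' \<open>v = 0\<close> homog_y0[OF T assms(3)] using u by simp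
    qed
  qed
  have RA: "R N = {(x, y). \<bar>A x y\<bar> \<le> (N / 4) powr (1/3) \<and> \<bar>B x y\<bar> \<le> (N / 27) powr (1/2)}" for N
    unfolding R_def regionR_def A_def B_def ..
  have bnd: "bounded {(x, y). \<bar>A x y\<bar> \<le> 1 \<and> \<bar>B x y\<bar> \<le> 1}"
    by (rule bounded_aux[OF assms(3) _ _ sA sB cA cB nz]) (use spos in auto)
  have "R 1 \<subseteq> {(x, y). \<bar>A x y\<bar> \<le> 1 \<and> \<bar>B x y\<bar> \<le> 1}"
  proof -
    have "(1 / 4 :: real) powr (1/3) \<le> 1" "(1 / 27 :: real) powr (1/2) \<le> 1" by (auto intro: powr_le1)
    thus ?thesis unfolding RA by auto
  qed
  hence bR1: "bounded (R 1)" using bnd bounded_subset by blast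
  have mem: "(x, y) \<in> R 1 \<longleftrightarrow> (N powr (\<tau> / (6 * \<sigma>)) * x, N powr (1 / (6 * \<sigma>)) * y) \<in> R N"
    if N: "N > 0" for N x y
  proof -
    define l where "l = N powr (1 / (6 * \<sigma>))"
    have lt: "N powr (\<tau> / (6 * \<sigma>)) = l ^ \<tau>" unfolding l_def using N by (simp add: powr_power)
    have l2: "l ^ (2 * s) = N powr (1/3)" unfolding l_def using N spos
      by (subst powr_power) (auto simp: sig)
    have l3: "l ^ (3 * s) = N powr (1/2)" unfolding l_def using N spos
      by (subst powr_power) (auto simp: sig)
    have e4: "(N / 4) powr (1/3) = N powr (1/3) * (1 / 4) powr (1/3)" using N by (simp add: powr_divide)
    have e27: "(N / 27) powr (1/2) = N powr (1/2) * (1 / 27) powr (1/2)" using N by (simp add: powr_divide)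
    have p2: "N powr (1/3) > 0" "N powr (1/2) > 0" using N by auto
    show ?thesis unfolding RA lt l_def[symmetric] using p2
      by (simp add: sA sB l2 l3 e4 e27 abs_mult)
  qed
  have img: "R N = (\<lambda>(x, y). (N powr (\<tau> / (6 * \<sigma>)) * x, N powr (1 / (6 * \<sigma>)) * y)) ` R 1"
    if N: "N > 0" for N
  proof
    show "(\<lambda>(x, y). (N powr (\<tau> / (6 * \<sigma>)) * x, N powr (1 / (6 * \<sigma>)) * y)) ` R 1 \<subseteq> R N"
      using mem[OF N] by auto
  next
    show "R N \<subseteq> (\<lambda>(x, y). (N powr (\<tau> / (6 * \<sigma>)) * x, N powr (1 / (6 * \<sigma>)) * y)) ` R 1"
    proof
      fix p assume p: "p \<in> R N"
      obtain x y where xy: "p = (x, y)" by (cases p)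
      define a where "a = N powr (\<tau> / (6 * \<sigma>))"
      define b where "b = N powr (1 / (6 * \<sigma>))"
      have ab: "a > 0" "b > 0" unfolding a_def b_def using N by auto
      have "(x / a, y / b) \<in> R 1" using mem[OF N, of "x / a" "y / b"] p ab unfolding xy a_def b_def by simp
      moreover have "p = (\<lambda>(x, y). (a * x, b * y)) (x / a, y / b)" using ab xy by simp
      ultimately show "p \<in> (\<lambda>(x, y). (N powr (\<tau> / (6 * \<sigma>)) * x, N powr (1 / (6 * \<sigma>)) * y)) ` R 1"
        unfolding a_def b_def by blast
    qed
  qed
  have meas: "measure lborel (R N) = N powr ((\<tau> + 1) / (6 * \<sigma>)) * V" if N: "N > 0" for N
  proof -
    have "closed (R N)" unfolding RA case_prod_beta'
      by (intro closed_Collect_conj closed_Collect_le continuous_intros cA cB)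
    hence "R N \<in> sets borel" by (rule borel_closed)
    hence "measure lborel (R N) = N powr (\<tau> / (6 * \<sigma>)) * N powr (1 / (6 * \<sigma>)) *
        measure lborel ((\<lambda>(x, y). (N powr (\<tau> / (6 * \<sigma>)) * x, N powr (1 / (6 * \<sigma>)) * y)) -` R N)"
      using N by (intro measure_scale2) auto
    also have "(\<lambda>(x, y). (N powr (\<tau> / (6 * \<sigma>)) * x, N powr (1 / (6 * \<sigma>)) * y)) -` R N = R 1"
      using mem[OF N] by auto
    also have "N powr (\<tau> / (6 * \<sigma>)) * N powr (1 / (6 * \<sigma>)) = N powr ((\<tau> + 1) / (6 * \<sigma>))"
      by (simp add: powr_add[symmetric] add_divide_distrib add.commute)
    finally show ?thesis unfolding V_def .
  qed
  obtain C where C: "\<And>p. p \<in> R 1 \<Longrightarrow> norm p \<le> C" using bR1 unfolding bounded_iff by blast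
  have last: "\<forall>N>0. \<forall>(x, y)\<in>R N. \<bar>x\<bar> \<le> C * N powr (\<tau> / (6 * \<sigma>)) \<and> \<bar>y\<bar> \<le> C * N powr (1 / (6 * \<sigma>))"
  proof (intro allI impI ballI)
    fix N :: real and p assume N: "N > 0" and p: "p \<in> R N"
    then obtain x y where xy: "(x, y) \<in> R 1" "p = (N powr (\<tau> / (6 * \<sigma>)) * x, N powr (1 / (6 * \<sigma>)) * y)"
      using img[OF N] by auto
    have "\<bar>x\<bar> \<le> C" "\<bar>y\<bar> \<le> C" using C[OF xy(1)] norm_fst_le[of x y] norm_snd_le[of y x] by auto
    hence "\<bar>x\<bar> * N powr (\<tau> / (6 * \<sigma>)) \<le> C * N powr (\<tau> / (6 * \<sigma>))"
          "\<bar>y\<bar> * N powr (1 / (6 * \<sigma>)) \<le> C * N powr (1 / (6 * \<sigma>))"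
      by (auto intro: mult_right_mono)
    thus "case p of (x, y) \<Rightarrow> \<bar>x\<bar> \<le> C * N powr (\<tau> / (6 * \<sigma>)) \<and> \<bar>y\<bar> \<le> C * N powr (1 / (6 * \<sigma>))"
      using xy(2) N by (simp add: abs_mult mult.commute)
  qed
  show ?thesis using img bR1 meas last by blast
qed

end
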